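(* Fix $t\in[T]$ and suppose $\|\theta^*\|_2\le L_\theta$ and $\|\widehat\theta_t-\theta^*\|_{\Sigma_t}\le\beta_t$. Let $p^*\in\mathbb{R}^{\mathcal{S}\times\mathcal{A}\times\mathcal{S}}$ be given by $p^*_{s,a,s'}=p(s'\mid s,a,\theta^* )$. Then $p^*\in\mathcal{P}_t$, where $\mathcal{P}_t$ is the set of $p\in[0,1]^{\mathcal{S}\times\mathcal{A}\times\mathcal{S}}$ such that for all $(s,a)\in\mathcal{S}\times\mathcal{A}$: $\sum_{s'\in\mathcal{S}_{s,a}}p_{s,a,s'}=1$ and $\sum_{s'\in\mathcal{S}_{s,a}}|p_{s,a,s'}-p(s'\mid s,a,\widehat\theta_t)|\le B^{1,t}_{s,a}+B^{2,t}_{s,a}$, with $B^{1,t}_{s,a}=\beta_t\sum_{s'\in\mathcal{S}_{s,a}}p(s'\mid s,a,\widehat\theta_t)\big\|\varphi(s,a,s')-\sum_{s''\in\mathcal{S}_{s,a}}p(s''\mid s,a,\widehat\theta_t)\varphi(s,a,s'')\big\|_{\Sigma_t^{-1}}$ and $B^{2,t}_{s,a}=3\beta_t^2\max_{s'\in\mathcal{S}_{s,a}}\|\varphi(s,a,s')\|_{\Sigma_t^{-1}}^2$.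
   Context: MNL model: finite $\mathcal{S},\mathcal{A}$; known reachable sets $\mathcal{S}_{s,a}$ and features $\varphi(s,a,s')\in\mathbb{R}^d$; $p(s'\mid s,a,\theta)=\exp(\varphi(s,a,s')^\top\theta)/\sum_{s''\in\mathcal{S}_{s,a}}\exp(\varphi(s,a,s'')^\top\theta)$ for $s'\in\mathcal{S}_{s,a}$, $0$ otherwise; $\theta^*$ is the unknown true parameter. $\widehat\theta_t\in\mathbb{R}^d$ is the online estimate and $\Sigma_t$ the positive definite matrix $\Sigma_t=\lambda I_d+\sum_{i<t}\nabla^2\ell_i(\widehat\theta_{i+1})$ ($\lambda>0$) produced by the online Newton-type estimator on the observed trajectory (with $\ell_i$ the multinomial log-loss of step $i$); $\beta_t>0$ is the confidence radius (in the paper $\beta_t=f(L_\theta,L_\varphi)\sqrt d(\log(\mathcal{U}t/\delta))^2$ for a polynomial $f$). $\|x\|_A=\sqrt{x^\top Ax}$. *)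

theory Defs
  imports "HOL-Analysis.Analysis"
begin

text \<open>MNL transition probability p(s' | s, a, theta); Sr s a is the reachable set S_{s,a}.\<close>
definition mnl_prob ::
  "('s \<Rightarrow> 'a \<Rightarrow> 's set) \<Rightarrow> ('s \<Rightarrow> 'a \<Rightarrow> 's \<Rightarrow> real^'d) \<Rightarrow> real^'d \<Rightarrow> 's \<Rightarrow> 'a \<Rightarrow> 's \<Rightarrow> real" where
  "mnl_prob Sr phi theta s a s' =
     (if s' \<in> Sr s a
      then exp (phi s a s' \<bullet> theta) / (\<Sum>s''\<in>Sr s a. exp (phi s a s'' \<bullet> theta))
      else 0)"

definition mnorm :: "real^'d^'d \<Rightarrow> real^'d \<Rightarrow> real" where
  "mnorm M x = sqrt (x \<bullet> (M *v x))"

definition pos_def_mat :: "real^'d^'d \<Rightarrow> bool" where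
  "pos_def_mat M \<longleftrightarrow> transpose M = M \<and> (\<forall>x. x \<noteq> 0 \<longrightarrow> x \<bullet> (M *v x) > 0)"

definition bonus1 ::
  "('s \<Rightarrow> 'a \<Rightarrow> 's set) \<Rightarrow> ('s \<Rightarrow> 'a \<Rightarrow> 's \<Rightarrow> real^'d) \<Rightarrow> real^'d \<Rightarrow> real^'d^'d \<Rightarrow> real \<Rightarrow> 's \<Rightarrow> 'a \<Rightarrow> real" where
  "bonus1 Sr phi theta Sig beta s a =
     beta * (\<Sum>s'\<in>Sr s a. mnl_prob Sr phi theta s a s' *
        mnorm (matrix_inv Sig)
          (phi s a s' - (\<Sum>s''\<in>Sr s a. mnl_prob Sr phi theta s a s'' *\<^sub>R phi s a s'')))"

definition bonus2 ::
  "('s \<Rightarrow> 'a \<Rightarrow> 's set) \<Rightarrow> ('s \<Rightarrow> 'a \<Rightarrow> 's \<Rightarrow> real^'d) \<Rightarrow> real^'d^'d \<Rightarrow> real \<Rightarrow> 's \<Rightarrow> 'a \<Rightarrow> real" where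
  "bonus2 Sr phi Sig beta s a =
     3 * beta\<^sup>2 * Max ((\<lambda>s'. (mnorm (matrix_inv Sig) (phi s a s'))\<^sup>2) ` Sr s a)"

definition conf_set ::
  "('s \<Rightarrow> 'a \<Rightarrow> 's set) \<Rightarrow> ('s \<Rightarrow> 'a \<Rightarrow> 's \<Rightarrow> real^'d) \<Rightarrow> real^'d \<Rightarrow> real^'d^'d \<Rightarrow> real
     \<Rightarrow> ('s \<Rightarrow> 'a \<Rightarrow> 's \<Rightarrow> real) set" where
  "conf_set Sr phi theta Sig beta =
     {p. (\<forall>s a s'. 0 \<le> p s a s' \<and> p s a s' \<le> 1) \<and>
         (\<forall>s a. (\<Sum>s'\<in>Sr s a. p s a s') = 1 \<and>
                (\<Sum>s'\<in>Sr s a. \<bar>p s a s' - mnl_prob Sr phi theta s a s'\<bar>)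
                  \<le> bonus1 Sr phi theta Sig beta s a + bonus2 Sr phi Sig beta s a)}"

end

theory Submission imports Defs begin
lemma pd_inv_right:
  fixes S :: "real^'d^'d"
  assumes "pos_def_mat S"
  shows "S ** matrix_inv S = mat 1"
proof -
  have "\<forall>x. S *v x = 0 \<longrightarrow> x = 0"
    using assms unfolding pos_def_mat_def by (metis inner_zero_right less_irrefl)
  then have "invertible S" using matrix_left_invertible_ker invertible_left_inverse by blast
  then show ?thesis unfolding invertible_def matrix_inv_def by (metis (mono_tags, lifting) someI_ex)
qed

lemma pd_sym:
  fixes S :: "real^'d^'d"
  assumes "pos_def_mat S"
  shows "u \<bullet> (S *v v) = (S *v u) \<bullet> v"
proof -
  have t: "transpose S = S" using assms pos_def_mat_def by auto
  have "u \<bullet> (S *v v) = (u v* S) \<bullet> v" by (simp add: dot_lmul_matrix)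
  also have "u v* S = S *v u" by (metis t transpose_matrix_vector)
  finally show ?thesis .
qed

lemma pd_nonneg:
  fixes S :: "real^'d^'d"
  assumes "pos_def_mat S"
  shows "0 \<le> v \<bullet> (S *v v)"
  using assms unfolding pos_def_mat_def by (cases "v = 0") (auto intro: less_imp_le)

lemma pd_cs:
  fixes S :: "real^'d^'d"
  assumes "pos_def_mat S"
  shows "(u \<bullet> (S *v v))\<^sup>2 \<le> (u \<bullet> (S *v u)) * (v \<bullet> (S *v v))"
proof (cases "v = 0")
  case True then show ?thesis by simp
next
  case False
  define b where "b = v \<bullet> (S *v v)"
  define c where "c = u \<bullet> (S *v v)"
  define a where "a = u \<bullet> (S *v u)"
  have bpos: "b > 0" using False assms unfolding pos_def_mat_def b_def by auto
  define l where "l = - c / b"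
  have "0 \<le> (u + l *\<^sub>R v) \<bullet> (S *v (u + l *\<^sub>R v))" using pd_nonneg[OF assms] .
  also have "... = a + 2 * l * c + l^2 * b"
    unfolding a_def b_def c_def
    using pd_sym[OF assms, of v u] inner_commute[of "S *v v" u]
    by (simp add: matrix_vector_right_distrib inner_add_left inner_add_right
        matrix_vector_mult_scaleR matrix_vector_right_distrib power2_eq_square algebra_simps)
  also have "... = a - c^2 / b" using bpos unfolding l_def by (simp add: field_simps power2_eq_square)
  finally have "c^2 / b \<le> a" by simp
  then have "c^2 \<le> a * b" using bpos by (simp add: divide_le_eq)
  then show ?thesis unfolding a_def b_def c_def .
qed

lemma pd_mnorm_cs:
  fixes S :: "real^'d^'d"
  assumes "pos_def_mat S"
  shows "\<bar>x \<bullet> y\<bar> \<le> mnorm (matrix_inv S) x * mnorm S y"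
    and "(mnorm (matrix_inv S) x)\<^sup>2 = x \<bullet> (matrix_inv S *v x)"
    and "0 \<le> mnorm (matrix_inv S) x"
proof -
  define u where "u = matrix_inv S *v x"
  have Su: "S *v u = x" unfolding u_def using pd_inv_right[OF assms]
    by (simp add: matrix_vector_mul_assoc)
  have e1: "u \<bullet> (S *v y) = x \<bullet> y" using pd_sym[OF assms, of u y] Su by simp
  have e2: "u \<bullet> (S *v u) = x \<bullet> (matrix_inv S *v x)" using Su u_def by (simp add: inner_commute)
  have nn: "0 \<le> x \<bullet> (matrix_inv S *v x)" using e2 pd_nonneg[OF assms, of u] by simp
  have "(x \<bullet> y)\<^sup>2 \<le> (x \<bullet> (matrix_inv S *v x)) * (y \<bullet> (S *v y))"
    using pd_cs[OF assms, of u y] e1 e2 by simp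
  then have "sqrt ((x \<bullet> y)\<^sup>2) \<le> sqrt (x \<bullet> (matrix_inv S *v x)) * sqrt (y \<bullet> (S *v y))"
    by (metis real_sqrt_le_mono real_sqrt_mult)
  then show "\<bar>x \<bullet> y\<bar> \<le> mnorm (matrix_inv S) x * mnorm S y" unfolding mnorm_def by simp
  show "(mnorm (matrix_inv S) x)\<^sup>2 = x \<bullet> (matrix_inv S *v x)" unfolding mnorm_def using nn by simp
  show "0 \<le> mnorm (matrix_inv S) x" unfolding mnorm_def using nn by simp
qed
lemma exp_quad_bound:
  fixes a :: real
  assumes "a^2 \<le> 8/3"
  shows "exp a - 1 - a \<le> 3/2 * a^2"
proof -
  define r where "r = \<bar>a\<bar>"
  have r2: "r^2 = a^2" unfolding r_def by simp
  have r0: "0 \<le> r" unfolding r_def by simp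
  have rle: "r \<le> 2"
  proof (rule ccontr)
    assume "\<not> r \<le> 2" then have "r^2 > 2^2" using r0 by (intro power_strict_mono) auto
    then show False using assms r2 by simp
  qed
  obtain t where t: "\<bar>t\<bar> \<le> \<bar>a\<bar>" and e: "exp a = (\<Sum>m<5. (a ^ m) / fact m) + (exp t / fact 5) * a ^ 5"
    using Maclaurin_exp_le[of a 5] by blast
  have et: "exp t \<le> 9"
  proof -
    have "exp t \<le> exp 2" using t rle r_def by simp
    also have "exp (2::real) = exp 1 * exp 1" by (simp flip: exp_add)
    also have "... \<le> 3 * 3" using exp_le by (intro mult_mono) auto
    finally show ?thesis by simp
  qed
  have et0: "0 < exp t" by simp
  have s: "(\<Sum>m<5. (a ^ m) / fact m) = 1 + a + a^2/2 + a^3/6 + a^4/24"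
    by (simp add: numeral_eq_Suc fact_numeral)
  have "exp a - 1 - a - a^2/2 = a^3/6 + a^4/24 + exp t / 120 * a^5"
    using e s by (simp add: fact_numeral)
  also have "... \<le> r^3/6 + r^4/24 + 9/120 * r^5"
  proof -
    have "a^3 \<le> r^3" unfolding r_def by (metis abs_ge_self power_abs)
    moreover have "a^4 = r^4" proof -
      have "a^4 = a^2*a^2" "r^4 = r^2*r^2" by (simp_all add: power_add[symmetric])
      then show ?thesis using r2 by simp
    qed
    moreover have "exp t / 120 * a^5 \<le> 9/120 * r^5"
    proof -
      have "exp t / 120 * a^5 \<le> \<bar>exp t / 120 * a^5\<bar>" by simp
      also have "... = exp t / 120 * r^5" unfolding r_def by (simp add: abs_mult power_abs)
      also have "... \<le> 9/120 * r^5" using et r0 by (intro mult_right_mono) auto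
      finally show ?thesis .
    qed
    ultimately show ?thesis by linarith
  qed
  also have "... \<le> a^2" 
  proof -
    have "r^3 = r * r^2" "r^4 = r^2 * r^2" "r^5 = r * r^2 * r^2" by algebra+
    moreover have "r * r^2 \<le> 2 * r^2" using rle by (intro mult_right_mono) auto
    moreover have "r^2 * r^2 \<le> 8/3 * r^2" using assms r2 by (intro mult_right_mono) auto
    moreover have "r * r^2 * r^2 \<le> 2 * (r^2 * r^2)"
      using rle by (simp only: mult.assoc) (intro mult_right_mono, auto)
    moreover have "0 \<le> r^2" by simp
    ultimately show ?thesis using r2 by linarith
  qed
  finally show ?thesis by simp
qed

lemma softmax_tv:
  fixes p z :: "'i \<Rightarrow> real" and I :: "'i set" and M2 :: real
  assumes fin: "finite I" and p0: "\<And>i. i \<in> I \<Longrightarrow> 0 \<le> p i" and ps: "sum p I = 1"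
    and zM: "\<And>i. i \<in> I \<Longrightarrow> (z i)^2 \<le> M2"
  shows "(\<Sum>i\<in>I. \<bar>p i * exp (z i) / (\<Sum>j\<in>I. p j * exp (z j)) - p i\<bar>)
          \<le> (\<Sum>i\<in>I. p i * \<bar>z i - (\<Sum>j\<in>I. p j * z j)\<bar>) + 3 * M2"
proof -
  define zb where "zb = (\<Sum>j\<in>I. p j * z j)"
  define a where "a i = z i - zb" for i
  define S where "S = (\<Sum>j\<in>I. p j * exp (a j))"
  define g where "g i = exp (a i) - 1 - a i" for i
  have g0: "0 \<le> g i" for i unfolding g_def using exp_ge_add_one_self[of "a i"] by linarith
  have pa: "(\<Sum>i\<in>I. p i * a i) = 0"
    unfolding a_def by (simp add: right_diff_distrib sum_subtractf zb_def flip: sum_distrib_right ps)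
  have Sg: "S - 1 = (\<Sum>i\<in>I. p i * g i)"
    unfolding g_def S_def using pa ps by (simp add: right_diff_distrib sum_subtractf)
  have S1: "1 \<le> S" using Sg g0 p0 by (smt (verit) sum_nonneg mult_nonneg_nonneg)
  have Spos: "0 < S" using S1 by simp
  have Z: "(\<Sum>j\<in>I. p j * exp (z j)) = exp zb * S"
    unfolding S_def a_def by (simp add: sum_distrib_left exp_diff field_simps)
  have q: "p i * exp (z i) / (\<Sum>j\<in>I. p j * exp (z j)) = p i * exp (a i) / S" for i
    unfolding Z a_def by (simp add: exp_diff field_simps)
  have sq: "(\<Sum>i\<in>I. p i * exp (a i) / S) = 1"
    using Spos unfolding S_def by (simp add: sum_divide_distrib[symmetric])
  have lhs: "(\<Sum>i\<in>I. \<bar>p i * exp (z i) / (\<Sum>j\<in>I. p j * exp (z j)) - p i\<bar>)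
       = (\<Sum>i\<in>I. \<bar>p i * exp (a i) / S - p i\<bar>)" using q by simp
  have rhs0: "0 \<le> (\<Sum>i\<in>I. p i * \<bar>z i - (\<Sum>j\<in>I. p j * z j)\<bar>)" using p0 by (simp add: sum_nonneg)
  show ?thesis
  proof (cases "2 \<le> 3 * M2")
    case True
    have "(\<Sum>i\<in>I. \<bar>p i * exp (a i) / S - p i\<bar>) \<le> (\<Sum>i\<in>I. p i * exp (a i) / S + p i)"
    proof (rule sum_mono)
      fix i assume "i \<in> I"
      then have "0 \<le> p i * exp (a i) / S" "0 \<le> p i" using p0 Spos by auto
      then show "\<bar>p i * exp (a i) / S - p i\<bar> \<le> p i * exp (a i) / S + p i" by linarith
    qed
    also have "... = 2" using sq ps by (simp add: sum.distrib)
    finally show ?thesis using lhs rhs0 True zb_def by linarith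
  next
    case False
    have vz: "(\<Sum>i\<in>I. p i * (a i)^2) = (\<Sum>i\<in>I. p i * (z i)^2) - zb^2"
    proof -
      have "(\<Sum>i\<in>I. p i * (a i)^2) = (\<Sum>i\<in>I. p i * (z i)^2 - 2 * zb * (p i * z i) + zb^2 * p i)"
        unfolding a_def by (intro sum.cong) (auto simp: power2_eq_square algebra_simps)
      also have "... = (\<Sum>i\<in>I. p i * (z i)^2) - 2 * zb * zb + zb^2"
        by (simp add: sum.distrib sum_subtractf flip: sum_distrib_left zb_def ps)
      finally show ?thesis by (simp add: power2_eq_square)
    qed
    have pz: "(\<Sum>i\<in>I. p i * (z i)^2) \<le> M2"
    proof -
      have "(\<Sum>i\<in>I. p i * (z i)^2) \<le> (\<Sum>i\<in>I. p i * M2)"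
        using p0 zM by (intro sum_mono mult_left_mono) auto
      also have "... = M2" by (simp flip: sum_distrib_right add: ps)
      finally show ?thesis .
    qed
    have va0: "0 \<le> (\<Sum>i\<in>I. p i * (a i)^2)" using p0 by (simp add: sum_nonneg)
    have zb2: "zb^2 \<le> M2" using vz va0 pz by linarith
    have a83: "(a i)^2 \<le> 8/3" if "i \<in> I" for i
    proof -
      have "(a i)^2 \<le> 2 * (z i)^2 + 2 * zb^2"
        unfolding a_def using sum_squares_ge_zero[of "z i + zb" 0] by (simp add: power2_eq_square algebra_simps)
      then show ?thesis using zM[OF that] zb2 False by linarith
    qed
    have pg: "(\<Sum>i\<in>I. p i * g i) \<le> 3/2 * M2"
    proof -
      have "(\<Sum>i\<in>I. p i * g i) \<le> (\<Sum>i\<in>I. p i * (3/2 * (a i)^2))"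
        using p0 a83 exp_quad_bound unfolding g_def by (intro sum_mono mult_left_mono) auto
      also have "... = 3/2 * (\<Sum>i\<in>I. p i * (a i)^2)" by (simp add: sum_distrib_left algebra_simps)
      finally show ?thesis using vz pz zero_le_power2[of zb] by linarith
    qed
    have "(\<Sum>i\<in>I. \<bar>p i * exp (a i) / S - p i\<bar>) \<le> (\<Sum>i\<in>I. p i * \<bar>a i\<bar> + p i * g i + (S - 1) * p i)"
    proof (rule sum_mono)
      fix i assume i: "i \<in> I"
      have "\<bar>p i * exp (a i) / S - p i\<bar> = p i * \<bar>exp (a i) - S\<bar> / S"
      proof -
        have "p i * exp (a i) / S - p i = p i * (exp (a i) - S) / S" using Spos by (simp add: field_simps)
        then show ?thesis using Spos p0[OF i] by (simp add: abs_mult abs_divide)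
      qed
      also have "... \<le> p i * \<bar>exp (a i) - S\<bar>"
        using S1 p0[OF i] by (simp add: divide_le_eq mult_le_cancel_left1) (smt (verit) mult_le_cancel_left1 mult_nonneg_nonneg abs_ge_zero)
      also have "... \<le> p i * (\<bar>a i\<bar> + g i + (S - 1))"
        using p0[OF i] g0[of i] S1 unfolding g_def by (intro mult_left_mono) auto
      finally show "\<bar>p i * exp (a i) / S - p i\<bar> \<le> p i * \<bar>a i\<bar> + p i * g i + (S - 1) * p i"
        by (simp add: algebra_simps)
    qed
    also have "... = (\<Sum>i\<in>I. p i * \<bar>a i\<bar>) + (\<Sum>i\<in>I. p i * g i) + (S - 1)"
      by (simp add: sum.distrib flip: sum_distrib_left add: ps)
    finally show ?thesis using lhs Sg pg unfolding a_def zb_def by linarith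
  qed
qed
lemma mnl_basic:
  fixes Sr :: "'s::finite \<Rightarrow> 'a \<Rightarrow> 's set"
  assumes "Sr s a \<noteq> {}"
  shows "0 \<le> mnl_prob Sr phi th s a s'" "mnl_prob Sr phi th s a s' \<le> 1"
    "(\<Sum>s'\<in>Sr s a. mnl_prob Sr phi th s a s') = 1"
proof -
  define Z where "Z = (\<Sum>s''\<in>Sr s a. exp (phi s a s'' \<bullet> th))"
  have Zpos: "0 < Z" unfolding Z_def using assms by (intro sum_pos) auto
  show "0 \<le> mnl_prob Sr phi th s a s'" unfolding mnl_prob_def using Zpos Z_def by auto
  show "mnl_prob Sr phi th s a s' \<le> 1"
  proof (cases "s' \<in> Sr s a")
    case True
    have "exp (phi s a s' \<bullet> th) \<le> Z" unfolding Z_def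
      using True by (intro member_le_sum) auto
    then show ?thesis unfolding mnl_prob_def using True Zpos Z_def by simp
  qed (simp add: mnl_prob_def)
  show "(\<Sum>s'\<in>Sr s a. mnl_prob Sr phi th s a s') = 1"
    unfolding mnl_prob_def using Zpos Z_def by (simp add: sum_divide_distrib[symmetric])
qed

theorem lemma2:
  fixes Sr :: "'s::finite \<Rightarrow> 'a::finite \<Rightarrow> 's set"
    and phi :: "'s \<Rightarrow> 'a \<Rightarrow> 's \<Rightarrow> real^'d::finite"
    and theta_star :: "real^'d"
    and theta_hat :: "nat \<Rightarrow> real^'d"
    and Sig :: "nat \<Rightarrow> real^'d^'d"
    and beta :: "nat \<Rightarrow> real"
    and L_theta :: real
    and t T :: nat
  assumes "\<And>s a. Sr s a \<noteq> {}"
    and "t \<in> {1..T}"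
    and "pos_def_mat (Sig t)"
    and "beta t > 0"
    and "norm theta_star \<le> L_theta"
    and "mnorm (Sig t) (theta_hat t - theta_star) \<le> beta t"
  shows "(\<lambda>s a s'. mnl_prob Sr phi theta_star s a s')
           \<in> conf_set Sr phi (theta_hat t) (Sig t) (beta t)"
proof -
  note ne = assms(1) and pd = assms(3)
  define th where "th = theta_hat t"
  define Sg where "Sg = Sig t"
  define b where "b = beta t"
  define D where "D = theta_star - th"
  have pdS: "pos_def_mat Sg" using pd Sg_def by simp
  have neg: "M *v (- x) = - (M *v x)" for M :: "real^'d^'d" and x
    by (simp add: matrix_vector_mult_def vec_eq_iff sum_negf)
  have mD: "mnorm Sg D \<le> b"
  proof -
    have e: "theta_hat t - theta_star = - D" unfolding D_def th_def by simp
    have "mnorm Sg D = mnorm Sg (theta_hat t - theta_star)"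
      unfolding e mnorm_def neg by simp
    then show ?thesis using assms(6) b_def Sg_def by simp
  qed
  have mD0: "0 \<le> mnorm Sg D" unfolding mnorm_def using pd_nonneg[OF pdS] by simp
  have key: "(\<Sum>s'\<in>Sr s a. \<bar>mnl_prob Sr phi theta_star s a s' - mnl_prob Sr phi th s a s'\<bar>)
      \<le> bonus1 Sr phi th Sg b s a + bonus2 Sr phi Sg b s a" for s a
  proof -
    define I where "I = Sr s a"
    have fin: "finite I" by simp
    have Ine: "I \<noteq> {}" using ne I_def by simp
    define p where "p i = mnl_prob Sr phi th s a i" for i
    define z where "z i = phi s a i \<bullet> D" for i
    define K where "K = Max ((\<lambda>s'. (mnorm (matrix_inv Sg) (phi s a s'))\<^sup>2) ` I)"
    define Zh where "Zh = (\<Sum>s''\<in>I. exp (phi s a s'' \<bullet> th))"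
    define Zs where "Zs = (\<Sum>s''\<in>I. exp (phi s a s'' \<bullet> theta_star))"
    have Zhpos: "0 < Zh" unfolding Zh_def using Ine by (intro sum_pos) auto
    have Zspos: "0 < Zs" unfolding Zs_def using Ine by (intro sum_pos) auto
    have ez: "exp (phi s a i \<bullet> th) * exp (z i) = exp (phi s a i \<bullet> theta_star)" for i
      unfolding z_def D_def by (simp add: inner_diff_right flip: exp_add)
    have pe: "p i * exp (z i) = exp (phi s a i \<bullet> theta_star) / Zh" if "i \<in> I" for i
      unfolding p_def mnl_prob_def using that ez[of i] I_def Zh_def by simp
    have sume: "(\<Sum>j\<in>I. p j * exp (z j)) = Zs / Zh"
      using pe unfolding Zs_def by (simp add: sum_divide_distrib)
    have qeq: "mnl_prob Sr phi theta_star s a i = p i * exp (z i) / (\<Sum>j\<in>I. p j * exp (z j))"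
      if "i \<in> I" for i
    proof -
      have i: "i \<in> Sr s a" using that I_def by simp
      have "mnl_prob Sr phi theta_star s a i = exp (phi s a i \<bullet> theta_star) / Zs"
        unfolding mnl_prob_def Zs_def I_def using i by (simp only: if_True)
      also have "... = (exp (phi s a i \<bullet> theta_star) / Zh) / (Zs / Zh)"
        using Zhpos by simp
      also have "... = p i * exp (z i) / (\<Sum>j\<in>I. p j * exp (z j))"
        by (simp only: pe[OF that] sume)
      finally show ?thesis .
    qed
    have p0: "0 \<le> p i" for i unfolding p_def by (rule mnl_basic(1)[of Sr, OF ne])
    have ps: "sum p I = 1" unfolding p_def I_def by (rule mnl_basic(3)[of Sr, OF ne])
    have zle: "\<bar>x \<bullet> D\<bar> \<le> mnorm (matrix_inv Sg) x * b" for x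
    proof -
      have "\<bar>x \<bullet> D\<bar> \<le> mnorm (matrix_inv Sg) x * mnorm Sg D" using pd_mnorm_cs(1)[OF pdS] .
      also have "... \<le> mnorm (matrix_inv Sg) x * b"
        using mD pd_mnorm_cs(3)[OF pdS] by (intro mult_left_mono) auto
      finally show ?thesis .
    qed
    have zM: "(z i)^2 \<le> b^2 * K" if "i \<in> I" for i
    proof -
      have "(z i)^2 = \<bar>z i\<bar>^2" by simp
      also have "... \<le> (mnorm (matrix_inv Sg) (phi s a i) * b)^2"
        using zle[of "phi s a i"] unfolding z_def by (intro power_mono) auto
      also have "... = b^2 * (mnorm (matrix_inv Sg) (phi s a i))^2" by (simp add: power_mult_distrib)
      also have "... \<le> b^2 * K" unfolding K_def using that fin by (intro mult_left_mono Max_ge) auto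
      finally show ?thesis .
    qed
    have tv: "(\<Sum>i\<in>I. \<bar>p i * exp (z i) / (\<Sum>j\<in>I. p j * exp (z j)) - p i\<bar>)
          \<le> (\<Sum>i\<in>I. p i * \<bar>z i - (\<Sum>j\<in>I. p j * z j)\<bar>) + 3 * (b^2 * K)"
      using softmax_tv[OF fin p0 ps, of z "b^2*K"] zM by blast
    have lhs: "(\<Sum>s'\<in>Sr s a. \<bar>mnl_prob Sr phi theta_star s a s' - mnl_prob Sr phi th s a s'\<bar>)
        = (\<Sum>i\<in>I. \<bar>p i * exp (z i) / (\<Sum>j\<in>I. p j * exp (z j)) - p i\<bar>)"
      unfolding I_def using qeq I_def p_def by (intro sum.cong) auto
    have b1: "(\<Sum>i\<in>I. p i * \<bar>z i - (\<Sum>j\<in>I. p j * z j)\<bar>) \<le> bonus1 Sr phi th Sg b s a"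
    proof -
      define xb where "xb = (\<Sum>s''\<in>I. p s'' *\<^sub>R phi s a s'')"
      have "z i - (\<Sum>j\<in>I. p j * z j) = (phi s a i - xb) \<bullet> D" for i
        unfolding z_def xb_def by (simp add: inner_diff_left inner_sum_left)
      then have "(\<Sum>i\<in>I. p i * \<bar>z i - (\<Sum>j\<in>I. p j * z j)\<bar>)
          \<le> (\<Sum>i\<in>I. p i * (mnorm (matrix_inv Sg) (phi s a i - xb) * b))"
        using zle p0 by (intro sum_mono mult_left_mono) auto
      also have "... = bonus1 Sr phi th Sg b s a"
        unfolding bonus1_def xb_def I_def p_def by (simp add: sum_distrib_left algebra_simps)
      finally show ?thesis .
    qed
    have b2: "bonus2 Sr phi Sg b s a = 3 * (b^2 * K)"
      unfolding bonus2_def K_def I_def by simp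
    show ?thesis using lhs tv b1 b2 by linarith
  qed
  show ?thesis
    unfolding conf_set_def
    using mnl_basic[of Sr, OF ne] key unfolding th_def Sg_def b_def by auto
qed

end
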